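(* Let $R_1,R_2$ be commutative rings with nonzero identity, $I_1$ an ideal of $R_1$, $I_2$ an ideal of $R_2$, $R=R_1\times R_2$ and $I=I_1\times I_2$. If $(x_1,y_1),(x_2,y_2)\in V(\Gamma''_{I_1}(R_1))\times V(\Gamma''_{I_2}(R_2))$ are not adjacent in $\Gamma''_I(R)$, then $x_1$ is not adjacent to $x_2$ in $\Gamma''_{I_1}(R_1)$ and $y_1$ is not adjacent to $y_2$ in $\Gamma''_{I_2}(R_2)$.
   Context: $R_1\times R_2$ has componentwise operations; $V(G)$ denotes the vertex set of a graph $G$. For a commutative ring $S$ and an ideal $J$ of $S$, $\Gamma''_J(S)$ is the simple undirected graph whose vertex set is $\{x\in S\setminus J : xS+J\neq S\}$, with distinct vertices $x,y$ adjacent if and only if $x\notin yS+J$ and $y\notin xS+J$. *)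

theory Defs
  imports "HOL-Algebra.Algebra"
begin

definition elt_ideal_sum :: "('a, 'm) ring_scheme \<Rightarrow> 'a \<Rightarrow> 'a set \<Rightarrow> 'a set" where
  "elt_ideal_sum S x J = {x \<otimes>\<^bsub>S\<^esub> s \<oplus>\<^bsub>S\<^esub> j | s j. s \<in> carrier S \<and> j \<in> J}"

definition g2_verts :: "('a, 'm) ring_scheme \<Rightarrow> 'a set \<Rightarrow> 'a set" where
  "g2_verts S J = {x \<in> carrier S - J. elt_ideal_sum S x J \<noteq> carrier S}"

definition g2_adj :: "('a, 'm) ring_scheme \<Rightarrow> 'a set \<Rightarrow> 'a \<Rightarrow> 'a \<Rightarrow> bool" where
  "g2_adj S J x y \<longleftrightarrow> x \<in> g2_verts S J \<and> y \<in> g2_verts S J \<and> x \<noteq> y \<and>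
     x \<notin> elt_ideal_sum S y J \<and> y \<notin> elt_ideal_sum S x J"

end

theory Submission
  imports Defs
begin

lemma RDP_mult: "(a, b) \<otimes>\<^bsub>RDirProd R S\<^esub> (c, d) = (a \<otimes>\<^bsub>R\<^esub> c, b \<otimes>\<^bsub>S\<^esub> d)"
  by (simp add: RDirProd_def DirProd_def monoid.defs)

lemma RDP_add: "(a, b) \<oplus>\<^bsub>RDirProd R S\<^esub> (c, d) = (a \<oplus>\<^bsub>R\<^esub> c, b \<oplus>\<^bsub>S\<^esub> d)"
  by (simp add: RDirProd_def DirProd_def monoid.defs)

lemma eis_prod:
  "elt_ideal_sum (RDirProd R S) (x, y) (I \<times> J) = elt_ideal_sum R x I \<times> elt_ideal_sum S y J"
  unfolding elt_ideal_sum_def RDirProd_carrier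
  by (auto simp: RDP_mult RDP_add)

lemma verts_prod:
  assumes "x \<in> g2_verts R I" "y \<in> g2_verts S J" "y \<in> carrier S"
  shows "(x, y) \<in> g2_verts (RDirProd R S) (I \<times> J)"
proof -
  have "x \<in> carrier R" "x \<notin> I" "elt_ideal_sum R x I \<noteq> carrier R" using assms(1) by (auto simp: g2_verts_def)
  moreover have "elt_ideal_sum (RDirProd R S) (x, y) (I \<times> J) \<noteq> carrier (RDirProd R S)"
    unfolding eis_prod RDirProd_carrier using assms(3) calculation(1,3) by (simp add: times_eq_iff) blast
  ultimately show ?thesis using assms(3) by (auto simp: g2_verts_def RDirProd_carrier)
qed

theorem corollary2p2:
  fixes R1 :: "('a, 'm) ring_scheme" and R2 :: "('b, 'n) ring_scheme"
  assumes "cring R1" and "cring R2"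
    and "\<one>\<^bsub>R1\<^esub> \<noteq> \<zero>\<^bsub>R1\<^esub>" and "\<one>\<^bsub>R2\<^esub> \<noteq> \<zero>\<^bsub>R2\<^esub>"
    and "ideal I1 R1" and "ideal I2 R2"
    and "x1 \<in> g2_verts R1 I1" and "x2 \<in> g2_verts R1 I1"
    and "y1 \<in> g2_verts R2 I2" and "y2 \<in> g2_verts R2 I2"
    and "\<not> g2_adj (RDirProd R1 R2) (I1 \<times> I2) (x1, y1) (x2, y2)"
  shows "\<not> g2_adj R1 I1 x1 x2 \<and> \<not> g2_adj R2 I2 y1 y2"
proof -
  have c1: "x1 \<in> carrier R1" "x2 \<in> carrier R1" using assms(7,8) by (auto simp: g2_verts_def)
  have c2: "y1 \<in> carrier R2" "y2 \<in> carrier R2" using assms(9,10) by (auto simp: g2_verts_def)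
  have v1: "(x1, y1) \<in> g2_verts (RDirProd R1 R2) (I1 \<times> I2)"
    using verts_prod[OF assms(7,9) c2(1)] .
  have v2: "(x2, y2) \<in> g2_verts (RDirProd R1 R2) (I1 \<times> I2)"
    using verts_prod[OF assms(8,10) c2(2)] .
  have v1': "(x1, y1) \<in> g2_verts (RDirProd R1 R2) (I1 \<times> I2)"
    using v1 .
  show ?thesis
    using assms(11) v1 v2 unfolding g2_adj_def eis_prod by auto
qed

end
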